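(* Let $K>0$ and let $A,P,B,Q$ be points of $\mathbb S^3_K$ with $A\neq P$, $B\neq Q$. Let $M_1$ and $M_2$ be the midpoints of the shortests $AP$ and $BQ$, respectively. Then $\operatorname{cosq}_K(\overrightarrow{AP},\overrightarrow{BQ})=\operatorname{cosq}_K(\overrightarrow{AM_1},\overrightarrow{BM_2})$.
   Context: For $K>0$, $\mathbb S^3_K$ is the open hemisphere of radius $1/\sqrt K$ of the round 3-sphere with its intrinsic metric $\rho$ (all distances are $<\pi/\sqrt K$ and shortests are unique). Let $\kappa=\sqrt K$. For $A\neq P$, $B\neq Q$ put $x=\rho(A,P)$, $y=\rho(B,Q)$, $a=\rho(A,B)$, $b=\rho(P,Q)$, $d=\rho(P,B)$, $f=\rho(A,Q)$ and $$\operatorname{cosq}_K(\overrightarrow{AP},\overrightarrow{BQ})=\frac{\cos\kappa b+\cos\kappa x\cos\kappa y}{\sin\kappa x\sin\kappa y}-\frac{(\cos\kappa x+\cos\kappa d)(\cos\kappa y+\cos\kappa f)}{(1+\cos\kappa a)\sin\kappa x\sin\kappa y}.$$ *)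

theory Defs
  imports "HOL-Analysis.Analysis"
begin

text \<open>Model of S^3_K: the open hemisphere (last coordinate positive) of the round
 3-sphere of radius 1/sqrt K centred at the origin of R^4, with its intrinsic
 (great-circle arc length) metric.\<close>

definition sphK :: "real \<Rightarrow> (real^4) set" where
  "sphK K = {x. norm x = 1 / sqrt K \<and> x $ 4 > 0}"

definition rhoK :: "real \<Rightarrow> real^4 \<Rightarrow> real^4 \<Rightarrow> real" where
  "rhoK K x y = arccos (K * (x \<bullet> y)) / sqrt K"

text \<open>M is the midpoint of the shortest XY (shortests are unique in S^3_K).\<close>
definition is_midpointK :: "real \<Rightarrow> real^4 \<Rightarrow> real^4 \<Rightarrow> real^4 \<Rightarrow> bool" where
  "is_midpointK K X Y M \<longleftrightarrow> M \<in> sphK K \<and>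
     rhoK K X M = rhoK K X Y / 2 \<and> rhoK K M Y = rhoK K X Y / 2"

definition cosqK :: "real \<Rightarrow> real^4 \<Rightarrow> real^4 \<Rightarrow> real^4 \<Rightarrow> real^4 \<Rightarrow> real" where
  "cosqK K A P B Q =
    (let k = sqrt K;
         x = rhoK K A P; y = rhoK K B Q; a = rhoK K A B;
         b = rhoK K P Q; d = rhoK K P B; f = rhoK K A Q
     in (cos (k*b) + cos (k*x) * cos (k*y)) / (sin (k*x) * sin (k*y))
        - ((cos (k*x) + cos (k*d)) * (cos (k*y) + cos (k*f)))
          / ((1 + cos (k*a)) * sin (k*x) * sin (k*y)))"

end

theory Submission
  imports Defs
begin

lemma sph_dot:
  assumes "K > 0" "X \<in> sphK K" shows "X \<bullet> X = 1 / K"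
proof -
  have "norm X = 1 / sqrt K" using assms(2) by (simp add: sphK_def)
  hence "X \<bullet> X = (1 / sqrt K)^2" by (metis power2_norm_eq_inner)
  thus ?thesis using assms(1) by (simp add: power_divide)
qed

lemma dot_abs:
  assumes "K > 0" "X \<in> sphK K" "Y \<in> sphK K" shows "\<bar>K * (X \<bullet> Y)\<bar> \<le> 1"
proof -
  have n: "norm X = 1 / sqrt K" "norm Y = 1 / sqrt K" using assms by (auto simp: sphK_def)
  have "\<bar>X \<bullet> Y\<bar> \<le> norm X * norm Y" by (rule Cauchy_Schwarz_ineq2)
  also have "\<dots> = 1 / K" using n assms(1) by (simp add: real_sqrt_mult[symmetric])
  finally show ?thesis using assms(1) by (simp add: abs_mult field_simps)
qed

lemma krho: "K > 0 \<Longrightarrow> sqrt K * rhoK K X Y = arccos (K * (X \<bullet> Y))"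
  by (simp add: rhoK_def)

lemma cos_rho:
  assumes "K > 0" "X \<in> sphK K" "Y \<in> sphK K"
  shows "cos (sqrt K * rhoK K X Y) = K * (X \<bullet> Y)"
  using dot_abs[OF assms] krho[OF assms(1)] by (simp add: cos_arccos_abs)

lemma dot_gt:
  assumes "K > 0" "X \<in> sphK K" "Y \<in> sphK K" shows "K * (X \<bullet> Y) > -1"
proof (rule ccontr)
  assume "\<not> ?thesis"
  hence e: "K * (X \<bullet> Y) = -1" using dot_abs[OF assms] by linarith
  have "(X + Y) \<bullet> (X + Y) = X \<bullet> X + 2 * (X \<bullet> Y) + Y \<bullet> Y"
    by (simp add: inner_add inner_commute)
  also have "\<dots> = 0"
  proof -
    have "X \<bullet> Y = -1/K" using e assms(1) by (simp add: field_simps)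
    thus ?thesis using sph_dot[OF assms(1,2)] sph_dot[OF assms(1,3)] by simp
  qed
  finally have "X + Y = 0" by simp
  hence "Y $ 4 = - (X $ 4)" by (metis add_eq_0_iff zero_index vector_add_component)
  thus False using assms(2,3) by (simp add: sphK_def)
qed

lemma dot_lt:
  assumes "K > 0" "X \<in> sphK K" "Y \<in> sphK K" "X \<noteq> Y" shows "K * (X \<bullet> Y) < 1"
proof (rule ccontr)
  assume "\<not> ?thesis"
  hence e: "K * (X \<bullet> Y) = 1" using dot_abs[OF assms(1-3)] by linarith
  have "(X - Y) \<bullet> (X - Y) = X \<bullet> X - 2 * (X \<bullet> Y) + Y \<bullet> Y"
    by (simp add: inner_diff inner_commute)
  also have "\<dots> = 0"
  proof -
    have "X \<bullet> Y = 1/K" using e assms(1) by (simp add: field_simps)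
    thus ?thesis using sph_dot[OF assms(1,2)] sph_dot[OF assms(1,3)] by simp
  qed
  finally have "X - Y = 0" by simp
  thus False using assms(4) by simp
qed

lemma midpt:
  assumes K: "K > 0" and XY: "X \<in> sphK K" "Y \<in> sphK K" "X \<noteq> Y"
    and M: "is_midpointK K X Y M"
  defines "t \<equiv> arccos (K * (X \<bullet> Y))"
  shows "0 < t" "t < pi" "sqrt K * rhoK K X M = t / 2" "sqrt K * rhoK K X Y = t"
    "M = (1 / (2 * cos (t/2))) *\<^sub>R (X + Y)" "cos t = K * (X \<bullet> Y)"
proof -
  have tb: "0 < t \<and> t < pi" unfolding t_def
    by (rule arccos_lt_bounded) (use dot_gt[OF K XY(1,2)] dot_lt[OF K XY] in auto)
  thus "0 < t" "t < pi" by auto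
  show t: "sqrt K * rhoK K X Y = t" using krho[OF K] t_def by simp
  have Ms: "M \<in> sphK K" and r1: "rhoK K X M = rhoK K X Y / 2" and r2: "rhoK K M Y = rhoK K X Y / 2"
    using M by (auto simp: is_midpointK_def)
  show h1: "sqrt K * rhoK K X M = t / 2" using r1 t by (metis times_divide_eq_right)
  have h2: "sqrt K * rhoK K M Y = t / 2" using r2 t by (metis times_divide_eq_right)
  have cXM: "K * (X \<bullet> M) = cos (t/2)" using cos_rho[OF K XY(1) Ms] h1 by simp
  have cMY: "K * (M \<bullet> Y) = cos (t/2)" using cos_rho[OF K Ms XY(2)] h2 by simp
  show ct: "cos t = K * (X \<bullet> Y)" using cos_rho[OF K XY(1,2)] t by simp
  have dc: "cos t = 2 * cos (t/2) ^ 2 - 1" using cos_double_cos[of "t/2"] by simp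
  define c where "c = cos (t/2)"
  have cpos: "c > 0" unfolding c_def using tb by (intro cos_gt_zero_pi) auto
  have MM: "M \<bullet> M = 1/K" by (rule sph_dot[OF K Ms])
  have XX: "X \<bullet> X = 1/K" by (rule sph_dot[OF K XY(1)])
  have YY: "Y \<bullet> Y = 1/K" by (rule sph_dot[OF K XY(2)])
  have XM: "X \<bullet> M = c / K" using cXM K unfolding c_def by (simp add: field_simps)
  have YM: "Y \<bullet> M = c / K" using cMY K unfolding c_def by (simp add: field_simps inner_commute)
  have XYv: "X \<bullet> Y = (2*c^2 - 1) / K" using ct dc K unfolding c_def by (simp add: field_simps)
  define v where "v = (1 / (2 * c)) *\<^sub>R (X + Y)"
  have "(M - v) \<bullet> (M - v) = M \<bullet> M - (1/c) * (X \<bullet> M + Y \<bullet> M)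
          + (1/(2*c))^2 * (X \<bullet> X + 2 * (X \<bullet> Y) + Y \<bullet> Y)"
    unfolding v_def by (simp add: inner_diff inner_add inner_commute algebra_simps power2_eq_square)
  also have "\<dots> = 0" unfolding MM XM YM XX YY XYv using cpos K
    by (simp add: field_simps power2_eq_square)
  finally have "M = v" by simp
  thus "M = (1 / (2 * cos (t/2))) *\<^sub>R (X + Y)" unfolding v_def c_def .
qed

lemma alg0:
  fixes u aq pb pq c1 c2 s1 s2 :: real
  assumes "u > 0" "c1>0" "c2>0" "s1>0" "s2>0"
  shows "(pq + (2 * c1^2 - 1) * (2 * c2^2 - 1)) / (2 * s1 * c1 * (2 * s2 * c2))
      - ((2 * c1^2 - 1) + pb) * ((2 * c2^2 - 1) + aq) / (u * (2 * s1 * c1) * (2 * s2 * c2))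
    = (((u - 1) + aq + pb + pq) / (4 * c1 * c2) + c1 * c2) / (s1 * s2)
      - (c1 + ((u - 1) + pb) / (2 * c1)) * (c2 + ((u - 1) + aq) / (2 * c2)) / (u * s1 * s2)"
  using assms by (simp add: field_simps) (simp add: algebra_simps power2_eq_square)
lemma alg:
  fixes ab aq pb pq c1 c2 s1 s2 :: real
  assumes "1 + ab > 0" "c1>0" "c2>0" "s1>0" "s2>0"
  shows "(pq + (2 * c1^2 - 1) * (2 * c2^2 - 1)) / (2 * s1 * c1 * (2 * s2 * c2))
      - ((2 * c1^2 - 1) + pb) * ((2 * c2^2 - 1) + aq) / ((1 + ab) * (2 * s1 * c1) * (2 * s2 * c2))
    = ((ab + aq + pb + pq) / (4 * c1 * c2) + c1 * c2) / (s1 * s2)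
      - (c1 + (ab + pb) / (2 * c1)) * (c2 + (ab + aq) / (2 * c2)) / ((1 + ab) * s1 * s2)"
  using alg0[OF assms, of pq pb aq] by simp

theorem lemma3p2:
  fixes K :: real and A P B Q M1 M2 :: "real^4"
  assumes "K > 0"
    and "A \<in> sphK K" "P \<in> sphK K" "B \<in> sphK K" "Q \<in> sphK K"
    and "A \<noteq> P" "B \<noteq> Q"
    and "is_midpointK K A P M1" "is_midpointK K B Q M2"
  shows "cosqK K A P B Q = cosqK K A M1 B M2"
proof -
  note K = assms(1)
  have k: "sqrt K > 0" using K by simp
  define t1 where "t1 = arccos (K * (A \<bullet> P))"
  define t2 where "t2 = arccos (K * (B \<bullet> Q))"
  note m1 = midpt[OF K assms(2,3,6,8), folded t1_def]
  note m2 = midpt[OF K assms(4,5,7,9), folded t2_def]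
  define c1 where "c1 = cos (t1/2)"
  define s1 where "s1 = sin (t1/2)"
  define c2 where "c2 = cos (t2/2)"
  define s2 where "s2 = sin (t2/2)"
  have c1p: "c1 > 0" unfolding c1_def using m1 by (intro cos_gt_zero_pi) auto
  have c2p: "c2 > 0" unfolding c2_def using m2 by (intro cos_gt_zero_pi) auto
  have s1p: "s1 > 0" unfolding s1_def using m1 by (intro sin_gt_zero) auto
  have s2p: "s2 > 0" unfolding s2_def using m2 by (intro sin_gt_zero) auto
  have ab: "1 + K * (A \<bullet> B) > 0" using dot_gt[OF K assms(2,4)] by simp
  have M1s: "M1 \<in> sphK K" using assms(8) by (simp add: is_midpointK_def)
  have M2s: "M2 \<in> sphK K" using assms(9) by (simp add: is_midpointK_def)
  have e1: "cos (sqrt K * rhoK K A P) = 2 * c1^2 - 1"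
    using m1(4) cos_double_cos[of "t1/2"] unfolding c1_def by simp
  have e2: "sin (sqrt K * rhoK K A P) = 2 * s1 * c1"
    using m1(4) sin_double[of "t1/2"] unfolding c1_def s1_def by simp
  have e3: "cos (sqrt K * rhoK K B Q) = 2 * c2^2 - 1"
    using m2(4) cos_double_cos[of "t2/2"] unfolding c2_def by simp
  have e4: "sin (sqrt K * rhoK K B Q) = 2 * s2 * c2"
    using m2(4) sin_double[of "t2/2"] unfolding c2_def s2_def by simp
  have e5: "cos (sqrt K * rhoK K A M1) = c1" unfolding m1(3) c1_def ..
  have e6: "sin (sqrt K * rhoK K A M1) = s1" unfolding m1(3) s1_def ..
  have e7: "cos (sqrt K * rhoK K B M2) = c2" unfolding m2(3) c2_def ..
  have e8: "sin (sqrt K * rhoK K B M2) = s2" unfolding m2(3) s2_def ..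
  have M1e: "M1 = (1 / (2 * c1)) *\<^sub>R (A + P)" using m1(5) unfolding c1_def .
  have M2e: "M2 = (1 / (2 * c2)) *\<^sub>R (B + Q)" using m2(5) unfolding c2_def .
  have e9: "cos (sqrt K * rhoK K M1 M2) =
     (K*(A \<bullet> B) + K*(A \<bullet> Q) + K*(P \<bullet> B) + K*(P \<bullet> Q)) / (4 * c1 * c2)"
    unfolding cos_rho[OF K M1s M2s] unfolding M1e M2e
    by (simp add: inner_add algebra_simps add_divide_distrib)
  have e10: "cos (sqrt K * rhoK K M1 B) = (K*(A \<bullet> B) + K*(P \<bullet> B)) / (2 * c1)"
    unfolding cos_rho[OF K M1s assms(4)] unfolding M1e
    by (simp add: inner_add algebra_simps add_divide_distrib)
  have e11: "cos (sqrt K * rhoK K A M2) = (K*(A \<bullet> B) + K*(A \<bullet> Q)) / (2 * c2)"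
    unfolding cos_rho[OF K assms(2) M2s] unfolding M2e
    by (simp add: inner_add algebra_simps add_divide_distrib)
  have e12: "cos (sqrt K * rhoK K P Q) = K*(P \<bullet> Q)" by (rule cos_rho[OF K assms(3,5)])
  have e13: "cos (sqrt K * rhoK K P B) = K*(P \<bullet> B)" by (rule cos_rho[OF K assms(3,4)])
  have e14: "cos (sqrt K * rhoK K A Q) = K*(A \<bullet> Q)" by (rule cos_rho[OF K assms(2,5)])
  have e15: "cos (sqrt K * rhoK K A B) = K*(A \<bullet> B)" by (rule cos_rho[OF K assms(2,4)])
  show ?thesis unfolding cosqK_def Let_def
    unfolding e1 e2 e3 e4 e5 e6 e7 e8 e9 e10 e11 e12 e13 e14 e15
    by (rule alg[OF ab c1p c2p s1p s2p])
qed

end
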